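(* Let $X\subset\mathbb R^2$ and let $\{\alpha_t:[0,1]\to X\}$ be a countable collection of nonconstant oscillatory geodesics, each parameterized proportional to total oscillation. Then there exists a line $l$ in the plane that is transverse to $\alpha_t$ for every $t$.
   Context: Total oscillation: let $g:\mathbb R^2\to[-1,1]$ depend only on $x_1$ with $g=-1$ for $x_1\le-3$, $\frac12(x_1+1)$ on $[-3,-1]$, $0$ on $[-1,1]$, $\frac12(x_1-1)$ on $[1,3]$, $1$ for $x_1\ge3$; for distinct parallel lines $(P,Q)$, $g_{(P,Q)}=g\circ h_{(P,Q)}$ with $h_{(P,Q)}$ a similarity sending $P$ to $\{x_1=-3\}$, $Q$ to $\{x_1=3\}$; $o(f,(P,Q))=\sup-\sum_{i=1}^k g_{(P,Q)}(f(a_{i-1}))g_{(P,Q)}(f(a_i))$ over finite $a\le a_0\le\dots\le a_k\le b$; with a fixed countable dense set $\{(P_i,Q_i)\}$ of pairs of parallel lines, $\mathcal T(\alpha)=\sum_i2^{-i}\frac{o(\alpha,(P_i,Q_i))}{1+o(\alpha,(P_i,Q_i))}$. An oscillatory geodesic in $X$ is a path of minimal $\mathcal T$ among paths in $X$ homotopic to it rel endpoints; $\alpha:[0,1]\to X$ is parameterized proportional to total oscillation if $\mathcal T(\alpha|_{[0,t]})=t\,\mathcal T(\alpha)$ for all $t$. A line $l$ is transverse to a path $\gamma:[a,b]\to X$ if no nonempty open interval $(c,d)\subset[a,b]$ is mapped by $\gamma$ into a line segment parallel to $l$. *)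

theory Defs
  imports "HOL-Analysis.Analysis"
begin

text \<open>The profile function g (depending only on the first coordinate).\<close>
definition gfun :: "real \<Rightarrow> real" where
  "gfun y = (if y \<le> -3 then -1
             else if y \<le> -1 then (y + 1) / 2
             else if y \<le> 1 then 0
             else if y \<le> 3 then (y - 1) / 2
             else 1)"

text \<open>A pair of distinct parallel lines (P,Q) is encoded by a triple (u,p,q) with u \<noteq> 0, p \<noteq> q:
  P = {x. u \<bullet> x = p}, Q = {x. u \<bullet> x = q}.\<close>
definition valid_pair :: "(real^2) \<times> real \<times> real \<Rightarrow> bool" where
  "valid_pair D \<longleftrightarrow> (case D of (u, p, q) \<Rightarrow> u \<noteq> 0 \<and> p \<noteq> q)"

definition line_P :: "(real^2) \<times> real \<times> real \<Rightarrow> (real^2) set" where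
  "line_P D = (case D of (u, p, q) \<Rightarrow> {x. u \<bullet> x = p})"

definition line_Q :: "(real^2) \<times> real \<times> real \<Rightarrow> (real^2) set" where
  "line_Q D = (case D of (u, p, q) \<Rightarrow> {x. u \<bullet> x = q})"

text \<open>The first coordinate of any similarity h with h(P) = {x1 = -3}, h(Q) = {x1 = 3}
  is the affine map x \<mapsto> -3 + 6 (u\<bullet>x - p)/(q - p); hence g_(P,Q) = g \<circ> h is:\<close>
definition g_pair :: "(real^2) \<times> real \<times> real \<Rightarrow> real^2 \<Rightarrow> real" where
  "g_pair D x = (case D of (u, p, q) \<Rightarrow> gfun (-3 + 6 * (u \<bullet> x - p) / (q - p)))"

definition osc :: "(real \<Rightarrow> real^2) \<Rightarrow> real \<Rightarrow> real \<Rightarrow> (real^2) \<times> real \<times> real \<Rightarrow> real" where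
  "osc f a b D = Sup { - (\<Sum>i\<in>{1..k}. g_pair D (f (s (i - 1))) * g_pair D (f (s i))) | k s.
        a \<le> s 0 \<and> (\<forall>i<k. s i \<le> s (Suc i)) \<and> s k \<le> b }"

text \<open>Density of the enumerated pairs in the space of pairs of distinct parallel lines
  (unit normal representatives; (u,p,q) and (-u,-p,-q) represent the same pair).\<close>
definition dense_pairs :: "(nat \<Rightarrow> (real^2) \<times> real \<times> real) \<Rightarrow> bool" where
  "dense_pairs D \<longleftrightarrow> (\<forall>i. valid_pair (D i)) \<and>
     (\<forall>u p q e. norm u = 1 \<and> p \<noteq> q \<and> e > 0 \<longrightarrow>
        (\<exists>i. case D i of (u', p', q') \<Rightarrow>
           norm u' = 1 \<and>
           ((norm (u' - u) + \<bar>p' - p\<bar> + \<bar>q' - q\<bar> < e) \<or>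
            (norm (- u' - u) + \<bar>- p' - p\<bar> + \<bar>- q' - q\<bar> < e))))"

text \<open>Total oscillation of f restricted to [a,b], with respect to the enumeration D
  (the paper's index i \<ge> 1 corresponds to i+1 here).\<close>
definition total_osc :: "(nat \<Rightarrow> (real^2) \<times> real \<times> real) \<Rightarrow> (real \<Rightarrow> real^2) \<Rightarrow> real \<Rightarrow> real \<Rightarrow> real" where
  "total_osc D f a b = (\<Sum>i. (1/2) ^ (Suc i) * (osc f a b (D i) / (1 + osc f a b (D i))))"

definition osc_geodesic :: "(nat \<Rightarrow> (real^2) \<times> real \<times> real) \<Rightarrow> (real^2) set \<Rightarrow> (real \<Rightarrow> real^2) \<Rightarrow> bool" where
  "osc_geodesic D X \<alpha> \<longleftrightarrow> path \<alpha> \<and> path_image \<alpha> \<subseteq> X \<and>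
     (\<forall>\<beta>. path \<beta> \<and> path_image \<beta> \<subseteq> X \<and> homotopic_paths X \<alpha> \<beta> \<longrightarrow>
          total_osc D \<alpha> 0 1 \<le> total_osc D \<beta> 0 1)"

definition param_prop_osc :: "(nat \<Rightarrow> (real^2) \<times> real \<times> real) \<Rightarrow> (real \<Rightarrow> real^2) \<Rightarrow> bool" where
  "param_prop_osc D \<alpha> \<longleftrightarrow> (\<forall>t\<in>{0..1}. total_osc D \<alpha> 0 t = t * total_osc D \<alpha> 0 1)"

definition is_line :: "(real^2) set \<Rightarrow> bool" where
  "is_line l \<longleftrightarrow> (\<exists>p v. v \<noteq> 0 \<and> l = {p + t *\<^sub>R v | t. True})"

definition transverse :: "(real^2) set \<Rightarrow> (real \<Rightarrow> real^2) \<Rightarrow> real \<Rightarrow> real \<Rightarrow> bool" where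
  "transverse l \<gamma> a b \<longleftrightarrow> \<not> (\<exists>c d. a \<le> c \<and> c < d \<and> d \<le> b \<and>
      (\<exists>x y w. closed_segment x y \<subseteq> (\<lambda>z. z + w) ` l \<and> \<gamma> ` {c<..<d} \<subseteq> closed_segment x y))"

end

theory Submission
  imports Defs
begin

lemma chain_le:
  fixes s :: "nat \<Rightarrow> real"
  assumes "\<forall>i<k. s i \<le> s (Suc i)" "i \<le> j" "j \<le> k"
  shows "s i \<le> s j"
  using assms(2,3)
proof (induction j)
  case 0 then show ?case by simp
next
  case (Suc j)
  show ?case
  proof (cases "i = Suc j")
    case True then show ?thesis by simp
  next
    case False
    then have "s i \<le> s j" using Suc by simp
    also have "\<dots> \<le> s (Suc j)" using assms(1) Suc.prems by simp
    finally show ?thesis .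
  qed
qed

lemma telescope:
  fixes s :: "nat \<Rightarrow> real"
  shows "(\<Sum>i\<in>{1..k}. s i - s (i - 1)) = s k - s 0"
  by (induction k) auto

lemma gfun_le1: "gfun y \<le> 1" "-1 \<le> gfun y"
  unfolding gfun_def by auto

lemma gfun_pos: "gfun y > 0 \<Longrightarrow> y > 1"
  unfolding gfun_def by (auto split: if_splits)
lemma gfun_neg: "gfun y < 0 \<Longrightarrow> y < -1"
  unfolding gfun_def by (auto split: if_splits)

lemma gterm_le1: "- (gfun x * gfun y) \<le> 1"
proof -
  have "\<bar>gfun x\<bar> \<le> 1" "\<bar>gfun y\<bar> \<le> 1" using gfun_le1 by (auto simp: abs_le_iff)
  then have "\<bar>gfun x * gfun y\<bar> \<le> 1" by (simp add: abs_mult mult_le_one)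
  then show ?thesis by linarith
qed

lemma gterm_pos: "- (gfun x * gfun y) > 0 \<Longrightarrow> \<bar>x - y\<bar> > 2"
proof -
  assume "- (gfun x * gfun y) > 0"
  then have "gfun x * gfun y < 0" by simp
  then have "(gfun x > 0 \<and> gfun y < 0) \<or> (gfun x < 0 \<and> gfun y > 0)"
    by (simp add: mult_less_0_iff)
  then show ?thesis using gfun_pos gfun_neg by fastforce
qed

lemma gfun_m1: "y \<le> -3 \<Longrightarrow> gfun y = -1" unfolding gfun_def by simp
lemma gfun_p1: "y \<ge> 3 \<Longrightarrow> gfun y = 1" unfolding gfun_def by simp

definition oscset :: "(real \<Rightarrow> real^2) \<Rightarrow> real \<Rightarrow> real \<Rightarrow> (real^2) \<times> real \<times> real \<Rightarrow> real set" where
  "oscset f a b D = { - (\<Sum>i\<in>{1..k}. g_pair D (f (s (i - 1))) * g_pair D (f (s i))) | k s.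
        a \<le> s 0 \<and> (\<forall>i<k. s i \<le> s (Suc i)) \<and> s k \<le> b }"

lemma osc_eq: "osc f a b D = Sup (oscset f a b D)"
  unfolding osc_def oscset_def ..

lemma zero_in_oscset: "a \<le> b \<Longrightarrow> 0 \<in> oscset f a b D"
  unfolding oscset_def
  by (rule CollectI, rule exI[of _ 0], rule exI[of _ "\<lambda>_. a"]) simp

lemma osc_bdd:
  assumes "continuous_on {0..1} f"
  shows "bdd_above (oscset f 0 1 D)"
proof -
  obtain u p q where D: "D = (u, p, q)" by (cases D) auto
  define H where "H t = -3 + (6 / (q - p)) * (u \<bullet> f t - p)" for t
  have gH: "g_pair D (f t) = gfun (H t)" for t unfolding D g_pair_def H_def by simp
  have "continuous_on {0..1} H" unfolding H_def
    by (intro continuous_intros assms)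
  then have "uniformly_continuous_on {0..1} H"
    by (intro compact_uniformly_continuous) auto
  then obtain \<eta> where eta: "\<eta> > 0"
    "\<And>x x'. x \<in> {0..1} \<Longrightarrow> x' \<in> {0..1} \<Longrightarrow> dist x' x < \<eta> \<Longrightarrow> dist (H x') (H x) < 2"
    unfolding uniformly_continuous_on_def by (metis zero_less_numeral)
  show ?thesis unfolding bdd_above_def
  proof (intro exI ballI)
    fix z assume "z \<in> oscset f 0 1 D"
    then obtain k s where z: "z = - (\<Sum>i\<in>{1..k}. g_pair D (f (s (i - 1))) * g_pair D (f (s i)))"
      and s: "0 \<le> s 0" "\<forall>i<k. s i \<le> s (Suc i)" "s k \<le> 1"
      unfolding oscset_def by blast
    have sin: "s i \<in> {0..1}" if "i \<le> k" for i
      using chain_le[OF s(2), of 0 i] chain_le[OF s(2), of i k] s that by auto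
    have tm: "- (gfun (H (s (i - 1))) * gfun (H (s i))) \<le> (s i - s (i - 1)) / \<eta>"
      if "i \<in> {1..k}" for i
    proof -
      have i1: "i - 1 \<le> k" "i \<le> k" using that by auto
      have mono: "s (i - 1) \<le> s i" using chain_le[OF s(2), of "i - 1" i] that by auto
      show ?thesis
      proof (cases "- (gfun (H (s (i - 1))) * gfun (H (s i))) > 0")
        case True
        then have "\<bar>H (s (i - 1)) - H (s i)\<bar> > 2" by (rule gterm_pos)
        then have "\<not> dist (s i) (s (i - 1)) < \<eta>"
          using eta(2)[OF sin[OF i1(1)] sin[OF i1(2)]] by (auto simp: dist_real_def abs_minus_commute)
        then have "s i - s (i - 1) \<ge> \<eta>" using mono by (simp add: dist_real_def)
        then have "(s i - s (i - 1)) / \<eta> \<ge> 1" using eta(1) by simp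
        then show ?thesis using gterm_le1 order_trans by blast
      next
        case False
        then show ?thesis using mono eta(1) by (smt (verit) divide_nonneg_pos)
      qed
    qed
    have "z = (\<Sum>i\<in>{1..k}. - (gfun (H (s (i - 1))) * gfun (H (s i))))"
      unfolding z gH by (simp add: sum_negf)
    also have "\<dots> \<le> (\<Sum>i\<in>{1..k}. (s i - s (i - 1)) / \<eta>)"
      by (rule sum_mono) (rule tm)
    also have "\<dots> = (s k - s 0) / \<eta>"
      using telescope[of s k] by (simp add: sum_divide_distrib[symmetric])
    also have "\<dots> \<le> 1 / \<eta>"
      using s eta(1) by (simp add: divide_right_mono)
    finally show "z \<le> 1 / \<eta>" .
  qed
qed

lemma osc_nonneg:
  assumes "continuous_on {0..1} f"
  shows "0 \<le> osc f 0 1 D"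
  unfolding osc_eq by (rule cSup_upper[OF zero_in_oscset osc_bdd[OF assms]]) simp


lemma g_pair_flip: "g_pair (-u, -p, -q) = g_pair (u, p, q)"
proof
  fix x
  have e1: "- u \<bullet> x - - p = - (u \<bullet> x - p)" "- q - - p = - (q - p)" by (simp_all add: inner_minus_left)
  have "6 * (- u \<bullet> x - - p) / (- q - - p) = 6 * (u \<bullet> x - p) / (q - p)"
    unfolding e1 by (simp only: mult_minus_right minus_divide_divide)
  then show "g_pair (-u, -p, -q) x = g_pair (u, p, q) x"
    unfolding g_pair_def by (simp only: prod.case)
qed

lemma g_pair_vals:
  assumes "P < Q" "U \<bullet> x \<le> P" "U \<bullet> y \<ge> Q"
  shows "g_pair (U, P, Q) x = -1" "g_pair (U, P, Q) y = 1"
proof -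
  have "6 * (U \<bullet> x - P) / (Q - P) \<le> 0" using assms by (simp add: divide_nonpos_pos)
  then show "g_pair (U, P, Q) x = -1" unfolding g_pair_def
    by (simp add: gfun_m1)
  have "(U \<bullet> y - P) / (Q - P) \<ge> 1" using assms by simp
  moreover have "6 * (U \<bullet> y - P) / (Q - P) = 6 * ((U \<bullet> y - P) / (Q - P))"
    by (metis times_divide_eq_right)
  ultimately have "6 * (U \<bullet> y - P) / (Q - P) \<ge> 6" by linarith
  then show "g_pair (U, P, Q) y = 1" unfolding g_pair_def
    by (simp add: gfun_p1)
qed

lemma osc_ge1_aux:
  assumes dp: "dense_pairs D" and cont: "continuous_on {0..1} f"
    and st: "0 \<le> s" "s < t" "t \<le> 1" and ne: "f s \<noteq> f t"
  shows "\<exists>i. osc f 0 1 (D i) \<ge> 1"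
proof -
  define z where "z = f t - f s"
  have zne: "z \<noteq> 0" using ne unfolding z_def by simp
  define u where "u = z /\<^sub>R norm z"
  have nu: "norm u = 1" using zne unfolding u_def by simp
  define a where "a = u \<bullet> f s"
  define b where "b = u \<bullet> f t"
  define L where "L = b - a"
  have L1: "L = u \<bullet> z" by (simp add: L_def a_def b_def z_def inner_diff_right)
  have L2: "u \<bullet> z = (z \<bullet> z) / norm z" unfolding u_def by (simp add: divide_inverse_commute)
  have L3: "z \<bullet> z = norm z * norm z" by (simp add: power2_norm_eq_inner[symmetric] power2_eq_square)
  have L: "L = norm z" using L1 L2 L3 zne by simp
  have Lpos: "L > 0" using zne L by simp
  define p where "p = a + L / 4"
  define q where "q = a + 3 * L / 4"
  have pq: "p \<noteq> q" using Lpos unfolding p_def q_def by simp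
  define M where "M = norm (f s) + norm (f t) + 1"
  have Mpos: "M > 0" unfolding M_def by (smt (verit) norm_ge_zero)
  define e where "e = L / (8 * M)"
  have epos: "e > 0" unfolding e_def using Lpos Mpos by simp
  have eM: "e * M = L / 8" unfolding e_def using Mpos by simp
  obtain i where "case D i of (u', p', q') \<Rightarrow> norm u' = 1 \<and>
           ((norm (u' - u) + \<bar>p' - p\<bar> + \<bar>q' - q\<bar> < e) \<or>
            (norm (- u' - u) + \<bar>- p' - p\<bar> + \<bar>- q' - q\<bar> < e))"
  proof -
    have H: "\<forall>u p q e. norm u = 1 \<and> p \<noteq> q \<and> e > 0 \<longrightarrow>
        (\<exists>i. case D i of (u', p', q') \<Rightarrow>
           norm u' = 1 \<and>
           ((norm (u' - u) + \<bar>p' - p\<bar> + \<bar>q' - q\<bar> < e) \<or>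
            (norm (- u' - u) + \<bar>- p' - p\<bar> + \<bar>- q' - q\<bar> < e)))"
      using dp unfolding dense_pairs_def by (rule conjunct2)
    have c: "norm u = 1 \<and> p \<noteq> q \<and> e > 0" using nu pq epos by simp
    have ex: "\<exists>i. case D i of (u', p', q') \<Rightarrow>
           norm u' = 1 \<and>
           ((norm (u' - u) + \<bar>p' - p\<bar> + \<bar>q' - q\<bar> < e) \<or>
            (norm (- u' - u) + \<bar>- p' - p\<bar> + \<bar>- q' - q\<bar> < e))"
      using mp[OF spec[OF spec[OF spec[OF spec[OF H, of u], of p], of q], of e] c] .
    from ex obtain i0 where "case D i0 of (u', p', q') \<Rightarrow>
           norm u' = 1 \<and>
           ((norm (u' - u) + \<bar>p' - p\<bar> + \<bar>q' - q\<bar> < e) \<or>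
            (norm (- u' - u) + \<bar>- p' - p\<bar> + \<bar>- q' - q\<bar> < e))" by (rule exE)
    then show ?thesis by (rule that)
  qed
  then obtain U P Q where UPQ: "g_pair (D i) = g_pair (U, P, Q)"
    "norm (U - u) + \<bar>P - p\<bar> + \<bar>Q - q\<bar> < e"
  proof (cases "D i")
    case (fields u' p' q')
    assume H: "case D i of (u', p', q') \<Rightarrow> norm u' = 1 \<and>
           ((norm (u' - u) + \<bar>p' - p\<bar> + \<bar>q' - q\<bar> < e) \<or>
            (norm (- u' - u) + \<bar>- p' - p\<bar> + \<bar>- q' - q\<bar> < e))"
      and th: "\<And>U P Q. g_pair (D i) = g_pair (U, P, Q) \<Longrightarrow>
        norm (U - u) + \<bar>P - p\<bar> + \<bar>Q - q\<bar> < e \<Longrightarrow> thesis"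
    from H fields have "(norm (u' - u) + \<bar>p' - p\<bar> + \<bar>q' - q\<bar> < e) \<or>
            (norm (- u' - u) + \<bar>- p' - p\<bar> + \<bar>- q' - q\<bar> < e)" by simp
    then show thesis
    proof
      assume "norm (u' - u) + \<bar>p' - p\<bar> + \<bar>q' - q\<bar> < e"
      then show thesis using th[of u' p' q'] fields by simp
    next
      assume "norm (- u' - u) + \<bar>- p' - p\<bar> + \<bar>- q' - q\<bar> < e"
      then show thesis using th[of "-u'" "-p'" "-q'"] fields g_pair_flip[of u' p' q'] by simp
    qed
  qed
  have e1: "norm (U - u) < e" "\<bar>P - p\<bar> < e" "\<bar>Q - q\<bar> < e"
    using UPQ(2) by (smt (verit) norm_ge_zero)+
  have cs: "\<bar>U \<bullet> x - u \<bullet> x\<bar> \<le> e * norm x" for x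
  proof -
    have "\<bar>U \<bullet> x - u \<bullet> x\<bar> = \<bar>(U - u) \<bullet> x\<bar>" by (simp add: inner_diff_left)
    also have "\<dots> \<le> norm (U - u) * norm x" by (rule Cauchy_Schwarz_ineq2)
    also have "\<dots> \<le> e * norm x" using e1(1) by (simp add: mult_right_mono)
    finally show ?thesis .
  qed
  have n1: "e * norm (f s) \<le> e * M" "e * norm (f t) \<le> e * M"
    using epos unfolding M_def by (simp_all add: mult_left_mono)
  have M1: "M \<ge> 1" unfolding M_def by (smt (verit) norm_ge_zero)
  have eL: "e \<le> L / 8" using mult_left_mono[OF M1, of e] epos eM by simp
  have cs1: "U \<bullet> f s \<le> u \<bullet> f s + e * norm (f s)" using cs[of "f s"] by (simp add: abs_le_iff)
  have cs2: "U \<bullet> f t \<ge> u \<bullet> f t - e * norm (f t)" using cs[of "f t"] by (simp add: abs_le_iff)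
  have eP: "P > p - e" "P < p + e" using e1(2) by (simp_all add: abs_less_iff)
  have eQ: "Q > q - e" "Q < q + e" using e1(3) by (simp_all add: abs_less_iff)
  have ns: "e * norm (f s) \<le> L / 8" and nt: "e * norm (f t) \<le> L / 8" using n1 eM by simp_all
  have c1: "U \<bullet> f s \<le> P"
  proof -
    have "U \<bullet> f s \<le> a + L / 8" using cs1 ns unfolding a_def by linarith
    moreover have "P > a + L / 8" using eP eL unfolding p_def by linarith
    ultimately show ?thesis by linarith
  qed
  have c2: "U \<bullet> f t \<ge> Q"
  proof -
    have "U \<bullet> f t \<ge> b - L / 8" using cs2 nt unfolding b_def by linarith
    moreover have "Q < a + 7 * L / 8" using eQ eL unfolding q_def by linarith
    moreover have "b = a + L" unfolding L_def by simp
    ultimately show ?thesis by linarith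
  qed
  have c3: "P < Q" using eP eQ eL Lpos unfolding p_def q_def by linarith
  note gv = g_pair_vals[OF c3 c1 c2]
  define \<sigma> where "\<sigma> = (\<lambda>j::nat. if j = 0 then s else t)"
  have "1 \<in> oscset f 0 1 (D i)"
    unfolding oscset_def
    apply (rule CollectI, rule exI[of _ 1], rule exI[of _ \<sigma>])
    using st gv UPQ(1) by (simp add: \<sigma>_def)
  then show ?thesis unfolding osc_eq
    by (meson cSup_upper osc_bdd[OF cont])
qed

lemma osc_ge1:
  assumes dp: "dense_pairs D" and cont: "continuous_on {0..1} f"
    and st: "s \<in> {0..1}" "t \<in> {0..1}" and ne: "f s \<noteq> f t"
  shows "\<exists>i. osc f 0 1 (D i) \<ge> 1"
proof (cases "s < t")
  case True then show ?thesis using osc_ge1_aux[OF dp cont _ True _ ne] st by auto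
next
  case False
  then have "t < s" using ne by (cases "s = t") auto
  then show ?thesis using osc_ge1_aux[OF dp cont _ _ _ ne[symmetric]] st by auto
qed

lemma total_osc_pos:
  assumes dp: "dense_pairs D" and cont: "continuous_on {0..1} f"
    and st: "s \<in> {0..1}" "t \<in> {0..1}" and ne: "f s \<noteq> f t"
  shows "total_osc D f 0 1 \<noteq> 0"
proof
  assume T0: "total_osc D f 0 1 = 0"
  define h where "h i = (1/2::real) ^ (Suc i) * (osc f 0 1 (D i) / (1 + osc f 0 1 (D i)))" for i
  have nn: "0 \<le> osc f 0 1 (D i)" for i by (rule osc_nonneg[OF cont])
  have h0: "0 \<le> h i" for i unfolding h_def using nn[of i] by simp
  have hle: "h i \<le> (1/2) ^ (Suc i)" for i
  proof -
    have r: "osc f 0 1 (D i) / (1 + osc f 0 1 (D i)) \<le> 1" using nn[of i] by simp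
    show ?thesis unfolding h_def using mult_left_le[OF r, of "(1/2)^Suc i"] by simp
  qed
  have sg: "summable (\<lambda>i. (1/2::real) ^ (Suc i))" by simp
  have sh: "summable h"
    by (rule summable_comparison_test'[OF sg]) (use h0 hle in auto)
  have "suminf h = 0" using T0 unfolding total_osc_def h_def .
  then have "\<forall>i. h i = 0" using suminf_eq_zero_iff[OF sh] h0 by blast
  moreover obtain i where "osc f 0 1 (D i) \<ge> 1" using osc_ge1[OF dp cont st ne] by blast
  ultimately show False unfolding h_def by (smt (verit) divide_pos_pos zero_less_power mult_pos_pos)
qed


lemma oscset_const:
  assumes "0 \<le> c1" "c1 \<le> d1" "\<And>x. x \<in> {c1..d1} \<Longrightarrow> f x = f c1"
  shows "oscset f 0 c1 E = oscset f 0 d1 E"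
proof
  show "oscset f 0 c1 E \<subseteq> oscset f 0 d1 E"
  proof
    fix z assume "z \<in> oscset f 0 c1 E"
    then obtain k s where z: "z = - (\<Sum>i\<in>{1..k}. g_pair E (f (s (i - 1))) * g_pair E (f (s i)))"
      and s: "0 \<le> s 0" "\<forall>i<k. s i \<le> s (Suc i)" "s k \<le> c1"
      unfolding oscset_def by blast
    have "s k \<le> d1" using s(3) assms(2) by linarith
    then show "z \<in> oscset f 0 d1 E" unfolding oscset_def using z s(1,2) by blast
  qed
next
  show "oscset f 0 d1 E \<subseteq> oscset f 0 c1 E"
  proof
    fix z assume "z \<in> oscset f 0 d1 E"
    then obtain k s where z: "z = - (\<Sum>i\<in>{1..k}. g_pair E (f (s (i - 1))) * g_pair E (f (s i)))"
      and s: "0 \<le> s 0" "\<forall>i<k. s i \<le> s (Suc i)" "s k \<le> d1"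
      unfolding oscset_def by blast
    define \<sigma> where "\<sigma> i = min (s i) c1" for i
    have fs: "f (\<sigma> i) = f (s i)" if "i \<le> k" for i
    proof (cases "s i \<le> c1")
      case True then show ?thesis by (simp add: \<sigma>_def)
    next
      case False
      have "s i \<le> d1" using chain_le[OF s(2), of i k] that s(3) by simp
      then have "s i \<in> {c1..d1}" using False by simp
      then have "f (s i) = f c1" by (rule assms(3))
      then show ?thesis using False by (simp add: \<sigma>_def)
    qed
    have "z = - (\<Sum>i\<in>{1..k}. g_pair E (f (\<sigma> (i - 1))) * g_pair E (f (\<sigma> i)))"
      unfolding z
    proof (intro arg_cong[where f=uminus] sum.cong refl)
      fix x assume "x \<in> {1..k}"
      then have "x \<le> k" "x - 1 \<le> k" by auto
      then show "g_pair E (f (s (x - 1))) * g_pair E (f (s x)) =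
            g_pair E (f (\<sigma> (x - 1))) * g_pair E (f (\<sigma> x))"
        using fs[of x] fs[of "x - 1"] by simp
    qed
    moreover have "0 \<le> \<sigma> 0" "\<forall>i<k. \<sigma> i \<le> \<sigma> (Suc i)" "\<sigma> k \<le> c1"
      using s assms(1) by (auto simp: \<sigma>_def)
    ultimately show "z \<in> oscset f 0 c1 E" unfolding oscset_def by blast
  qed
qed

lemma const_T0:
  assumes par: "param_prop_osc D f"
    and cd: "0 \<le> c" "c < d" "d \<le> 1"
    and const: "\<And>x y. x \<in> {c<..<d} \<Longrightarrow> y \<in> {c<..<d} \<Longrightarrow> f x = f y"
  shows "total_osc D f 0 1 = 0"
proof -
  define c1 where "c1 = c + (d - c) / 3"
  define d1 where "d1 = c + 2 * (d - c) / 3"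
  have cc: "0 \<le> c1" "c1 < d1" "d1 \<le> 1" "c < c1" "d1 < d"
    using cd unfolding c1_def d1_def by (simp_all add: field_simps)
  have "oscset f 0 c1 E = oscset f 0 d1 E" for E
    by (rule oscset_const) (use cc const in auto)
  then have "total_osc D f 0 c1 = total_osc D f 0 d1"
    unfolding total_osc_def osc_eq by simp
  moreover have "total_osc D f 0 c1 = c1 * total_osc D f 0 1"
    "total_osc D f 0 d1 = d1 * total_osc D f 0 1"
  proof -
    have "\<forall>t\<in>{0..1}. total_osc D f 0 t = t * total_osc D f 0 1"
      using par unfolding param_prop_osc_def .
    moreover have "c1 \<in> {0..1}" "d1 \<in> {0..1}" using cc by auto
    ultimately show "total_osc D f 0 c1 = c1 * total_osc D f 0 1"
      "total_osc D f 0 d1 = d1 * total_osc D f 0 1" by blast+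
  qed
  ultimately have "c1 * total_osc D f 0 1 = d1 * total_osc D f 0 1" by simp
  then show ?thesis using cc by simp
qed

lemma rat_nonconst:
  fixes c d :: real and f :: "real \<Rightarrow> 'a::metric_space"
  assumes cont: "continuous_on {0..1} f"
    and cd: "0 \<le> c" "c < d" "d \<le> 1"
    and nc: "\<not> (\<forall>x\<in>{c<..<d}. \<forall>y\<in>{c<..<d}. f x = f y)"
  shows "\<exists>s\<in>\<rat>. \<exists>t\<in>\<rat>. s \<in> {c<..<d} \<and> t \<in> {c<..<d} \<and> f s \<noteq> f t"
proof (rule ccontr)
  assume H: "\<not> ?thesis"
  obtain q0 where q0: "q0 \<in> \<rat>" "c < q0" "q0 < d" using Rats_dense_in_real[OF cd(2)] by blast
  have "f t = f q0" if t: "t \<in> {c<..<d}" for t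
  proof (rule ccontr)
    assume ne: "f t \<noteq> f q0"
    have "t \<in> {0..1}" using t cd by auto
    then obtain \<delta> where \<delta>: "\<delta> > 0" "\<And>t'. t' \<in> {0..1} \<Longrightarrow> dist t' t < \<delta> \<Longrightarrow> dist (f t') (f t) < dist (f q0) (f t)"
      using cont ne unfolding continuous_on_iff by (metis dist_pos_lt)
    have "max c (t - \<delta>) < min d (t + \<delta>)" using \<delta>(1) t by auto
    then obtain r where r: "r \<in> \<rat>" "max c (t - \<delta>) < r" "r < min d (t + \<delta>)"
      using Rats_dense_in_real by blast
    have H': "\<forall>s\<in>\<rat>. \<forall>t\<in>\<rat>. s \<in> {c<..<d} \<longrightarrow> t \<in> {c<..<d} \<longrightarrow> f s = f t"
      using H by blast
    have "r \<in> {c<..<d}" using r(2,3) by simp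
    moreover have "q0 \<in> {c<..<d}" using q0(2,3) by simp
    ultimately have "f r = f q0" using H'[rule_format, OF r(1) q0(1)] by blast
    moreover have "dist (f r) (f t) < dist (f q0) (f t)"
      using r cd by (intro \<delta>(2)) (auto simp: dist_real_def)
    ultimately show False by simp
  qed
  then show False using nc by auto
qed


theorem lemma4p6:
  fixes X :: "(real^2) set"
    and D :: "nat \<Rightarrow> (real^2) \<times> real \<times> real"
    and A :: "(real \<Rightarrow> real^2) set"
  assumes "dense_pairs D"
    and "countable A"
    and "\<And>\<alpha>. \<alpha> \<in> A \<Longrightarrow> osc_geodesic D X \<alpha>"
    and "\<And>\<alpha>. \<alpha> \<in> A \<Longrightarrow> \<exists>s\<in>{0..1}. \<exists>t\<in>{0..1}. \<alpha> s \<noteq> \<alpha> t"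
    and "\<And>\<alpha>. \<alpha> \<in> A \<Longrightarrow> param_prop_osc D \<alpha>"
  shows "\<exists>l. is_line l \<and> (\<forall>\<alpha>\<in>A. transverse l \<alpha> 0 1)"
proof -
  define rat2 where "rat2 = (\<lambda>\<alpha>::real \<Rightarrow> real^2. \<lambda>(s::real, t::real). (\<alpha> t - \<alpha> s) $ 2 / (\<alpha> t - \<alpha> s) $ 1)"
  define bad where "bad = (\<Union>\<alpha>\<in>A. rat2 \<alpha> ` (\<rat> \<times> \<rat>))"
  have "countable bad" unfolding bad_def
    by (intro countable_UN[OF assms(2)] countable_image countable_SIGMA countable_rat)
  then obtain m where m: "m \<notin> bad" using uncountable_UNIV_real
    by (metis UNIV_eq_I countable_subset subset_UNIV)
  define v :: "real^2" where "v = axis 1 1 + m *\<^sub>R axis 2 1"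
  have v1: "v $ 1 = 1" and v2: "v $ 2 = m" unfolding v_def by (simp_all add: axis_def)
  have vne: "v \<noteq> 0" using v1 by auto
  define l where "l = {0 + t *\<^sub>R v | t. True}"
  have "is_line l" unfolding is_line_def l_def using vne by blast
  moreover have "transverse l \<alpha> 0 1" if aA: "\<alpha> \<in> A" for \<alpha>
  proof -
    have cont: "continuous_on {0..1} \<alpha>" using assms(3)[OF aA] unfolding osc_geodesic_def path_def by simp
    obtain s0 t0 where st0: "s0 \<in> {0..1}" "t0 \<in> {0..1}" "\<alpha> s0 \<noteq> \<alpha> t0" using assms(4)[OF aA] by blast
    have Tne: "total_osc D \<alpha> 0 1 \<noteq> 0" by (rule total_osc_pos[OF assms(1) cont st0])
    show ?thesis unfolding transverse_def
    proof
      assume "\<exists>c d. 0 \<le> c \<and> c < d \<and> d \<le> 1 \<and>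
      (\<exists>x y w. closed_segment x y \<subseteq> (\<lambda>z. z + w) ` l \<and> \<alpha> ` {c<..<d} \<subseteq> closed_segment x y)"
      then obtain c d where cd: "0 \<le> c" "c < d" "d \<le> 1"
        and ex: "\<exists>x y w. closed_segment x y \<subseteq> (\<lambda>z. z + w) ` l \<and> \<alpha> ` {c<..<d} \<subseteq> closed_segment x y"
        by blast
      then obtain x y w where xyw: "closed_segment x y \<subseteq> (\<lambda>z. z + w) ` l"
        "\<alpha> ` {c<..<d} \<subseteq> closed_segment x y" by blast
      have sub: "\<alpha> ` {c<..<d} \<subseteq> (\<lambda>z. z + w) ` l" using xyw(2,1) by (rule subset_trans)
      have nc: "\<not> (\<forall>x\<in>{c<..<d}. \<forall>y\<in>{c<..<d}. \<alpha> x = \<alpha> y)"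
        using const_T0[OF assms(5)[OF aA] cd] Tne by blast
      obtain s t where st: "s \<in> \<rat>" "t \<in> \<rat>" "s \<in> {c<..<d}" "t \<in> {c<..<d}" "\<alpha> s \<noteq> \<alpha> t"
        using rat_nonconst[OF cont cd nc] by blast
      have onl: "\<exists>a. \<alpha> r = a *\<^sub>R v + w" if "r \<in> {c<..<d}" for r
      proof -
        have "\<alpha> r \<in> (\<lambda>z. z + w) ` l" using sub that by blast
        then obtain z where z: "z \<in> l" "\<alpha> r = z + w" by blast
        from z(1) obtain a where "z = a *\<^sub>R v" unfolding l_def by auto
        then show ?thesis using z(2) by blast
      qed
      obtain a where a: "\<alpha> s = a *\<^sub>R v + w" using onl[OF st(3)] by blast
      obtain b where b: "\<alpha> t = b *\<^sub>R v + w" using onl[OF st(4)] by blast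
      have diff: "\<alpha> t - \<alpha> s = (b - a) *\<^sub>R v" using a b by (simp add: algebra_simps)
      have "b \<noteq> a" using st(5) a b by auto
      have d1: "(\<alpha> t - \<alpha> s) $ 1 = b - a" using diff v1 by simp
      have d2: "(\<alpha> t - \<alpha> s) $ 2 = (b - a) * m" using diff v2 by simp
      have "rat2 \<alpha> (s, t) = m" unfolding rat2_def prod.case d1 d2 using \<open>b \<noteq> a\<close> by simp
      then have "m \<in> bad" unfolding bad_def using aA st by blast
      then show False using m by simp
    qed
  qed
  ultimately show ?thesis by blast
qed

end
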